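(* Let $A:\mathbb{R}^n\to\mathbb{R}^{n\times n}$ be symmetric-matrix valued, three times continuously differentiable at every $v\neq 0$, with $A(\alpha v)=A(v)$ for all $\alpha\in\mathbb{R}\setminus\{0\}$. Let $J(v):=\frac{\partial}{\partial v}(A(v)v)$, fix $\sigma\in\mathbb{R}$, and define, for $v$ with $J(v)-\sigma I$ nonsingular, $\psi(v):=(J(v)-\sigma I)^{-1}v$ and $\varphi(v):=\psi(v)/\|\psi(v)\|_2$. (a) Suppose $(\lambda_*,v_* )\in\mathbb{R}\times\mathbb{R}^n$ satisfies $A(v_* )v_*=\lambda_*v_*$ with $\|v_*\|_2=1$, and suppose $\sigma\neq\lambda_*$ and $J(v_* )-\sigma I$ is nonsingular. Then $\varphi(v_* )=v_*$ if $\sigma<\lambda_*$, and $\varphi(v_* )=-v_*$ if $\sigma>\lambda_*$. (b) Suppose $v_*$ is such that $J(v_* )-\sigma I$ is nonsingular and $v_*=\varphi(v_* )$ or $v_*=-\varphi(v_* )$. Then $A(v_* )v_*=\lambda_*v_*$ with $$\lambda_*:=\sigma\pm\frac{1}{\|(J(v_* )-\sigma I)^{-1}v_*\|_2}=v_*^TA(v_* )v_*,$$ where the sign $\pm$ corresponds to the case $\varphi(v_* )=\pm v_*$.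
   Context: $\|\cdot\|_2$ is the Euclidean norm; $\frac{\partial}{\partial v}$ denotes the Jacobian matrix. *)

theory Defs
  imports "HOL-Analysis.Analysis"
begin

definition C3_on :: "'a::real_normed_vector set \<Rightarrow> ('a \<Rightarrow> 'b::real_normed_vector) \<Rightarrow> bool" where
  "C3_on S f \<longleftrightarrow>
     (\<exists>(D1 :: 'a \<Rightarrow> ('a \<Rightarrow>\<^sub>L 'b)) (D2 :: 'a \<Rightarrow> ('a \<Rightarrow>\<^sub>L ('a \<Rightarrow>\<^sub>L 'b)))
        (D3 :: 'a \<Rightarrow> ('a \<Rightarrow>\<^sub>L ('a \<Rightarrow>\<^sub>L ('a \<Rightarrow>\<^sub>L 'b)))).
        (\<forall>x\<in>S. (f has_derivative blinfun_apply (D1 x)) (at x)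
              \<and> (D1 has_derivative blinfun_apply (D2 x)) (at x)
              \<and> (D2 has_derivative blinfun_apply (D3 x)) (at x))
        \<and> continuous_on S D3)"

end

theory Submission imports Defs begin
lemma bb: "bounded_bilinear (\<lambda>(M::real^'n^'n) x. M *v x)"
proof -
  have "bilinear (\<lambda>(M::real^'n^'n) x. M *v x)"
    unfolding bilinear_def
    by (auto intro!: linearI simp: matrix_vector_mult_def vec_eq_iff algebra_simps sum.distrib sum_distrib_left)
  then show ?thesis by (simp add: bilinear_conv_bounded_bilinear)
qed

lemma dir_zero:
  fixes A :: "real^'n \<Rightarrow> real^'n^'n"
  assumes v: "v \<noteq> 0" and dA: "(A has_derivative D) (at v)"
    and scale_inv: "\<forall>v (\<alpha>::real). \<alpha> \<noteq> 0 \<longrightarrow> A (\<alpha> *\<^sub>R v) = A v"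
  shows "D v = 0"
proof -
  have d1: "((\<lambda>t::real. v + t *\<^sub>R v) has_derivative (\<lambda>t. t *\<^sub>R v)) (at 0)"
    by (auto intro!: derivative_eq_intros)
  have "((\<lambda>t::real. A (v + t *\<^sub>R v)) has_derivative (\<lambda>t. D (t *\<^sub>R v))) (at 0)"
    using has_derivative_compose[OF d1, of A D] dA by (simp add: o_def)
  moreover have "((\<lambda>t::real. A (v + t *\<^sub>R v)) has_derivative (\<lambda>t. 0)) (at 0)"
  proof (rule has_derivative_transform_within_open[where f="\<lambda>t. A v" and s="ball 0 1"])
    show "((\<lambda>t. A v) has_derivative (\<lambda>t. 0)) (at (0::real))" by simp
    fix t :: real assume "t \<in> ball 0 1"
    then have "1 + t \<noteq> 0" by auto
    then have "A ((1 + t) *\<^sub>R v) = A v" using scale_inv by blast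
    then show "A v = A (v + t *\<^sub>R v)" by (simp add: algebra_simps)
  qed auto
  ultimately have "(\<lambda>t. D (t *\<^sub>R v)) = (\<lambda>t. 0)"
    using has_derivative_unique by blast
  then show ?thesis by (metis scale_one)
qed

lemma Jv:
  fixes A :: "real^'n \<Rightarrow> real^'n^'n"
  assumes v: "v \<noteq> 0" and dA: "(A has_derivative D) (at v)"
    and scale_inv: "\<forall>v (\<alpha>::real). \<alpha> \<noteq> 0 \<longrightarrow> A (\<alpha> *\<^sub>R v) = A v"
  shows "jacobian (\<lambda>w. A w *v w) (at v) *v v = A v *v v"
proof -
  have D0: "D v = 0" using dir_zero[OF v dA scale_inv] .
  have F: "((\<lambda>w. A w *v w) has_derivative (\<lambda>h. A v *v h + D h *v v)) (at v)"
    by (rule bounded_bilinear.FDERIV[OF bb dA has_derivative_ident])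
  have fd: "frechet_derivative (\<lambda>w. A w *v w) (at v) = (\<lambda>h. A v *v h + D h *v v)"
    by (rule frechet_derivative_at[OF F, symmetric])
  have lin: "linear (\<lambda>h. A v *v h + D h *v v)" by (rule has_derivative_linear[OF F])
  have "jacobian (\<lambda>w. A w *v w) (at v) *v v = matrix (\<lambda>h. A v *v h + D h *v v) *v v"
    unfolding jacobian_def fd ..
  also have "\<dots> = A v *v v + D v *v v"
    using fun_cong[OF matrix_vector_mul(2)[OF lin], of v] by (simp only:)
  also have "\<dots> = A v *v v" by (simp add: D0)
  finally show ?thesis .
qed

lemma inv_mult:
  fixes M :: "real^'n^'n"
  assumes "invertible M"
  shows "M ** matrix_inv M = mat 1" "matrix_inv M ** M = mat 1"
  using assms someI_ex[of "\<lambda>A'. M ** A' = mat 1 \<and> A' ** M = mat 1"]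
  unfolding invertible_def matrix_inv_def by auto

lemma inv_solve:
  fixes M :: "real^'n^'n"
  assumes "invertible M"
  shows "M *v (matrix_inv M *v y) = y" "matrix_inv M *v (M *v y) = y"
  using inv_mult[OF assms] by (simp_all add: matrix_vector_mul_assoc)


lemma shift_mult:
  fixes J :: "real^'n^'n"
  shows "(J - c *\<^sub>R mat 1) *v x = J *v x - c *\<^sub>R x"
  by (simp add: matrix_vector_mult_diff_rdistrib scaleR_matrix_vector_assoc[symmetric])

theorem proposition2:
  fixes A :: "real^'n \<Rightarrow> real^'n^'n" and \<sigma> :: real
    and J :: "real^'n \<Rightarrow> real^'n^'n" and \<psi> \<phi> :: "real^'n \<Rightarrow> real^'n"
  assumes sym: "\<forall>v. transpose (A v) = A v"
    and smooth: "C3_on (UNIV - {0}) A"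
    and scale_inv: "\<forall>v (\<alpha>::real). \<alpha> \<noteq> 0 \<longrightarrow> A (\<alpha> *\<^sub>R v) = A v"
    and J_def: "\<forall>v. J v = jacobian (\<lambda>w. A w *v w) (at v)"
    and \<psi>_def: "\<forall>v. \<psi> v = matrix_inv (J v - \<sigma> *\<^sub>R mat 1) *v v"
    and \<phi>_def: "\<forall>v. \<phi> v = (1 / norm (\<psi> v)) *\<^sub>R \<psi> v"
  shows "(\<forall>lam vs. A vs *v vs = lam *\<^sub>R vs \<and> norm vs = 1 \<and> \<sigma> \<noteq> lam
              \<and> invertible (J vs - \<sigma> *\<^sub>R mat 1)
            \<longrightarrow> (\<sigma> < lam \<longrightarrow> \<phi> vs = vs) \<and> (\<sigma> > lam \<longrightarrow> \<phi> vs = - vs))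
       \<and> (\<forall>vs. vs \<noteq> 0 \<and> invertible (J vs - \<sigma> *\<^sub>R mat 1)
            \<longrightarrow> (\<phi> vs = vs \<longrightarrow>
                   A vs *v vs = (\<sigma> + 1 / norm (\<psi> vs)) *\<^sub>R vs
                 \<and> \<sigma> + 1 / norm (\<psi> vs) = vs \<bullet> (A vs *v vs))
              \<and> (\<phi> vs = - vs \<longrightarrow>
                   A vs *v vs = (\<sigma> - 1 / norm (\<psi> vs)) *\<^sub>R vs
                 \<and> \<sigma> - 1 / norm (\<psi> vs) = vs \<bullet> (A vs *v vs)))"
proof -
  obtain D1 D2 D3 where H: "\<forall>x\<in>UNIV - {0}. (A has_derivative blinfun_apply (D1 x)) (at x)
              \<and> (D1 has_derivative blinfun_apply (D2 x)) (at x)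
              \<and> (D2 has_derivative blinfun_apply (D3 x)) (at x)"
    using smooth unfolding C3_on_def by (elim exE conjE) (rule that)
  have D1: "(A has_derivative blinfun_apply (D1 x)) (at x)" if "x \<noteq> 0" for x
    using H that by blast
  have JV: "J v *v v = A v *v v" if "v \<noteq> 0" for v
    using Jv[OF that D1[OF that] scale_inv] J_def by simp
  have MV: "(J v - \<sigma> *\<^sub>R mat 1) *v v = A v *v v - \<sigma> *\<^sub>R v" if "v \<noteq> 0" for v
    using JV[OF that] by (simp add: shift_mult)
  have partA: "(\<sigma> < lam \<longrightarrow> \<phi> vs = vs) \<and> (\<sigma> > lam \<longrightarrow> \<phi> vs = - vs)"
    if h: "A vs *v vs = lam *\<^sub>R vs" "norm vs = 1" "\<sigma> \<noteq> lam"
      "invertible (J vs - \<sigma> *\<^sub>R mat 1)" for lam vs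
  proof -
    define M where "M = J vs - \<sigma> *\<^sub>R mat 1"
    have inv: "invertible M" unfolding M_def by (rule h(4))
    have psiv: "\<psi> vs = matrix_inv M *v vs" unfolding M_def by (rule \<psi>_def[rule_format])
    have vs0: "vs \<noteq> 0" using h(2) by auto
    have Mv: "M *v vs = (lam - \<sigma>) *\<^sub>R vs" unfolding M_def MV[OF vs0] h(1) by (simp add: algebra_simps)
    have "vs = matrix_inv M *v (M *v vs)" by (rule inv_solve(2)[OF inv, symmetric])
    also have "\<dots> = matrix_inv M *v ((lam - \<sigma>) *\<^sub>R vs)" by (simp only: Mv)
    also have "\<dots> = (lam - \<sigma>) *\<^sub>R (matrix_inv M *v vs)" by (rule matrix_vector_mult_scaleR)
    finally have eq: "vs = (lam - \<sigma>) *\<^sub>R (matrix_inv M *v vs)" .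
    have ne: "lam - \<sigma> \<noteq> 0" using h(3) by simp
    have "\<psi> vs = matrix_inv M *v vs" by (rule psiv)
    also have "\<dots> = (1 / (lam - \<sigma>)) *\<^sub>R ((lam - \<sigma>) *\<^sub>R (matrix_inv M *v vs))" using ne by simp
    also have "\<dots> = (1 / (lam - \<sigma>)) *\<^sub>R vs" by (simp only: eq[symmetric])
    finally have psi: "\<psi> vs = (1 / (lam - \<sigma>)) *\<^sub>R vs" .
    have "\<phi> vs = (1 / norm (\<psi> vs)) *\<^sub>R \<psi> vs" by (rule \<phi>_def[rule_format])
    also have "\<dots> = (1 / norm ((1 / (lam - \<sigma>)) *\<^sub>R vs)) *\<^sub>R ((1 / (lam - \<sigma>)) *\<^sub>R vs)"
      by (simp only: psi)
    also have "\<dots> = (\<bar>lam - \<sigma>\<bar> / (lam - \<sigma>)) *\<^sub>R vs" using h(2) by simp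
    finally have phi: "\<phi> vs = (\<bar>lam - \<sigma>\<bar> / (lam - \<sigma>)) *\<^sub>R vs" .
    show ?thesis
    proof (intro conjI impI)
      assume "\<sigma> < lam"
      then have "\<bar>lam - \<sigma>\<bar> / (lam - \<sigma>) = 1" by simp
      then show "\<phi> vs = vs" using phi by simp
    next
      assume "\<sigma> > lam"
      then have "\<bar>lam - \<sigma>\<bar> = - (lam - \<sigma>)" by simp
      then have "\<bar>lam - \<sigma>\<bar> / (lam - \<sigma>) = -1" using ne by (simp add: field_simps)
      then show "\<phi> vs = - vs" using phi by simp
    qed
  qed
  have partB: "(\<phi> vs = s *\<^sub>R vs \<longrightarrow>
                   A vs *v vs = (\<sigma> + s / norm (\<psi> vs)) *\<^sub>R vs
                 \<and> \<sigma> + s / norm (\<psi> vs) = vs \<bullet> (A vs *v vs))"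
    if h: "vs \<noteq> 0" "invertible (J vs - \<sigma> *\<^sub>R mat 1)" and s: "s = 1 \<or> s = -1" for vs s
  proof
    assume e: "\<phi> vs = s *\<^sub>R vs"
    define M where "M = J vs - \<sigma> *\<^sub>R mat 1"
    define n where "n = norm (\<psi> vs)"
    have inv: "invertible M" unfolding M_def by (rule h(2))
    have psiv: "\<psi> vs = matrix_inv M *v vs" unfolding M_def by (rule \<psi>_def[rule_format])
    have phiv: "\<phi> vs = (1 / n) *\<^sub>R \<psi> vs" unfolding n_def by (rule \<phi>_def[rule_format])
    have "\<psi> vs \<noteq> 0"
    proof
      assume "\<psi> vs = 0"
      then have "\<phi> vs = 0" using phiv by simp
      then show False using e h(1) s by auto
    qed
    then have n0: "n > 0" unfolding n_def by simp
    have e': "(1 / n) *\<^sub>R \<psi> vs = s *\<^sub>R vs" using phiv e by (simp only:)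
    have "\<psi> vs = n *\<^sub>R ((1 / n) *\<^sub>R \<psi> vs)" using n0 by simp
    also have "\<dots> = n *\<^sub>R (s *\<^sub>R vs)" by (simp only: e')
    also have "\<dots> = (s * n) *\<^sub>R vs" by (simp add: mult.commute)
    finally have psi: "\<psi> vs = (s * n) *\<^sub>R vs" .
    have "norm (s *\<^sub>R vs) = norm ((1 / n) *\<^sub>R \<psi> vs)" by (simp only: e')
    then have nv: "norm vs = 1" using s n0 unfolding n_def by auto
    have "vs = M *v \<psi> vs" by (simp only: psiv inv_solve(1)[OF inv])
    also have "\<dots> = M *v ((s * n) *\<^sub>R vs)" by (simp only: psi)
    also have "\<dots> = (s * n) *\<^sub>R (M *v vs)" by (rule matrix_vector_mult_scaleR)
    finally have X: "vs = (s * n) *\<^sub>R (M *v vs)" .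
    have "(s * n) *\<^sub>R (M *v vs) = vs" by (rule X[symmetric])
    then have "s *\<^sub>R ((s * n) *\<^sub>R (M *v vs)) = s *\<^sub>R vs" by (rule arg_cong)
    moreover have "s * (s * n) = n" using s by auto
    ultimately have "n *\<^sub>R (M *v vs) = s *\<^sub>R vs" by simp
    then have "(1/n) *\<^sub>R (n *\<^sub>R (M *v vs)) = (s / n) *\<^sub>R vs" by simp
    then have "M *v vs = (s / n) *\<^sub>R vs" using n0 by simp
    then have "(J vs - \<sigma> *\<^sub>R mat 1) *v vs = (s / n) *\<^sub>R vs" unfolding M_def .
    then have "A vs *v vs - \<sigma> *\<^sub>R vs = (s / n) *\<^sub>R vs" by (simp only: MV[OF h(1)])
    then have Av: "A vs *v vs = (\<sigma> + s / n) *\<^sub>R vs" by (simp add: algebra_simps)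
    moreover have "vs \<bullet> (A vs *v vs) = \<sigma> + s / n"
      using Av nv by (simp add: dot_square_norm power2_eq_square)
    ultimately show "A vs *v vs = (\<sigma> + s / norm (\<psi> vs)) *\<^sub>R vs
                 \<and> \<sigma> + s / norm (\<psi> vs) = vs \<bullet> (A vs *v vs)" using n_def by simp
  qed
  have B1: "A vs *v vs = (\<sigma> + 1 / norm (\<psi> vs)) *\<^sub>R vs
                 \<and> \<sigma> + 1 / norm (\<psi> vs) = vs \<bullet> (A vs *v vs)"
    if "vs \<noteq> 0" "invertible (J vs - \<sigma> *\<^sub>R mat 1)" "\<phi> vs = vs" for vs
  proof -
    have "\<phi> vs = 1 *\<^sub>R vs" using that(3) by simp
    then show ?thesis using partB[of vs 1, OF that(1,2) disjI1[OF refl]] by blast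
  qed
  have B2: "A vs *v vs = (\<sigma> - 1 / norm (\<psi> vs)) *\<^sub>R vs
                 \<and> \<sigma> - 1 / norm (\<psi> vs) = vs \<bullet> (A vs *v vs)"
    if "vs \<noteq> 0" "invertible (J vs - \<sigma> *\<^sub>R mat 1)" "\<phi> vs = - vs" for vs
  proof -
    have "\<phi> vs = (-1) *\<^sub>R vs" using that by simp
    moreover have "\<sigma> + -1 / norm (\<psi> vs) = \<sigma> - 1 / norm (\<psi> vs)" by simp
    ultimately show ?thesis using partB[of vs "-1", OF that(1,2) disjI2[OF refl]] by argo
  qed
  show ?thesis
    apply (intro conjI allI impI; elim conjE)
    subgoal using partA by blast
    subgoal using partA by blast
    subgoal using B1 by blast
    subgoal using B1 by blast
    subgoal using B2 by blast
    subgoal using B2 by blast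
    done
qed

end
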